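(* (Extended Perron's method.) Let $\Omega\subset\mathbb{R}^N$ be an open domain, let $g:\mathbb{R}^N\setminus\Omega\to\mathbb{R}$ be bounded, and let $\mathcal{A}:\mathbb{R}^N\times\mathcal{X}\times\mathbb{R}\to\mathbb{R}$ satisfy assumptions (a), (b), (c) below. Consider the DPP $\mathcal{A}(x,u,u(x))=0$ for $x\in\Omega$, $u=g$ on $\mathbb{R}^N\setminus\Omega$. Assume (H1) there exists at least one viscosity subsolution and (H2) all viscosity subsolutions are uniformly bounded from above. Let $\underline{S}$ be the set of all viscosity subsolutions. Then the function $$\overline{u}(x)=\sup_{v\in\underline{S}}v(x)\ \ (x\in\Omega),\qquad \overline{u}(x)=g(x)\ \ (x\in\mathbb{R}^N\setminus\Omega)$$ is a viscosity solution of the DPP. Respectively, if (H1* ) there exists at least one viscosity supersolution and (H2* ) all viscosity supersolutions are uniformly bounded from below, and $\overline{S}$ is the set of all viscosity supersolutions, then $\underline{u}(x)=\inf_{v\in\overline{S}}v(x)$ for $x\in\Omega$, $\underline{u}=g$ on $\mathbb{R}^N\setminus\Omega$, is a viscosity solution of the DPP.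
   Context: $\overline{\mathcal{X}}$ is the set of bounded functions $\mathbb{R}^N\to\mathbb{R}$, $\mathcal{X}\subset\overline{\mathcal{X}}$ a fixed subset. Assumptions: (a) $\varphi_1\le\varphi_2$ implies $\mathcal{A}(x,\varphi_2,s)\le\mathcal{A}(x,\varphi_1,s)$; (b) $s_1\le s_2$ implies $\mathcal{A}(x,\varphi,s_1)\le\mathcal{A}(x,\varphi,s_2)$; (c) for every $(x,\varphi)$ the map $s\mapsto\mathcal{A}(x,\varphi,s)$ has exactly one zero. $u\in\overline{\mathcal{X}}$ is a viscosity supersolution of the DPP if $u\ge g$ on $\mathbb{R}^N\setminus\Omega$ and, for each $x\in\Omega$, $\mathcal{A}(x,\varphi,u(x))\ge0$ for all $\varphi\in\mathcal{X}$ with $\varphi\le u$; a viscosity subsolution if $u\le g$ on $\mathbb{R}^N\setminus\Omega$ and, for each $x\in\Omega$, $\mathcal{A}(x,\varphi,u(x))\le0$ for all $\varphi\in\mathcal{X}$ with $\varphi\ge u$; a viscosity solution is a $u\in\overline{\mathcal{X}}$ that is both. *)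

theory Defs
  imports "HOL-Analysis.Analysis"
begin

definition Xbar :: "('a \<Rightarrow> real) set" where
  "Xbar = {u. bounded (range u)}"

definition visc_super ::
  "('a \<Rightarrow> real) set \<Rightarrow> ('a \<Rightarrow> ('a \<Rightarrow> real) \<Rightarrow> real \<Rightarrow> real) \<Rightarrow> 'a set \<Rightarrow> ('a \<Rightarrow> real)
   \<Rightarrow> ('a \<Rightarrow> real) \<Rightarrow> bool" where
  "visc_super X A \<Omega> g u \<longleftrightarrow> u \<in> Xbar \<and> (\<forall>x\<in>-\<Omega>. g x \<le> u x) \<and>
     (\<forall>x\<in>\<Omega>. \<forall>\<phi>\<in>X. \<phi> \<le> u \<longrightarrow> 0 \<le> A x \<phi> (u x))"

definition visc_sub ::
  "('a \<Rightarrow> real) set \<Rightarrow> ('a \<Rightarrow> ('a \<Rightarrow> real) \<Rightarrow> real \<Rightarrow> real) \<Rightarrow> 'a set \<Rightarrow> ('a \<Rightarrow> real)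
   \<Rightarrow> ('a \<Rightarrow> real) \<Rightarrow> bool" where
  "visc_sub X A \<Omega> g u \<longleftrightarrow> u \<in> Xbar \<and> (\<forall>x\<in>-\<Omega>. u x \<le> g x) \<and>
     (\<forall>x\<in>\<Omega>. \<forall>\<phi>\<in>X. u \<le> \<phi> \<longrightarrow> A x \<phi> (u x) \<le> 0)"

definition visc_sol ::
  "('a \<Rightarrow> real) set \<Rightarrow> ('a \<Rightarrow> ('a \<Rightarrow> real) \<Rightarrow> real \<Rightarrow> real) \<Rightarrow> 'a set \<Rightarrow> ('a \<Rightarrow> real)
   \<Rightarrow> ('a \<Rightarrow> real) \<Rightarrow> bool" where
  "visc_sol X A \<Omega> g u \<longleftrightarrow> visc_super X A \<Omega> g u \<and> visc_sub X A \<Omega> g u"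

end

theory Submission
  imports Defs
begin

lemma perron_sub:
  fixes X :: "('a \<Rightarrow> real) set"
    and A :: "'a \<Rightarrow> ('a \<Rightarrow> real) \<Rightarrow> real \<Rightarrow> real"
    and \<Omega> :: "'a set" and g :: "'a \<Rightarrow> real"
  assumes g_bdd: "bounded (g ` (- \<Omega>))"
    and A_a: "\<And>x \<phi>1 \<phi>2 s. \<phi>1 \<in> X \<Longrightarrow> \<phi>2 \<in> X \<Longrightarrow> \<phi>1 \<le> \<phi>2 \<Longrightarrow> A x \<phi>2 s \<le> A x \<phi>1 s"
    and A_b: "\<And>x \<phi> s1 s2. \<phi> \<in> X \<Longrightarrow> s1 \<le> s2 \<Longrightarrow> A x \<phi> s1 \<le> A x \<phi> s2"
    and A_c: "\<And>x \<phi>. \<phi> \<in> X \<Longrightarrow> \<exists>!s. A x \<phi> s = 0"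
    and v0: "visc_sub X A \<Omega> g v0"
    and Mb: "\<forall>v. visc_sub X A \<Omega> g v \<longrightarrow> (\<forall>x. v x \<le> M)"
  defines "S \<equiv> {v. visc_sub X A \<Omega> g v}"
    and "u \<equiv> \<lambda>x. if x \<in> \<Omega> then (SUP v\<in>{v. visc_sub X A \<Omega> g v}. v x) else g x"
  shows "visc_sol X A \<Omega> g u"
proof -
  have uS: "u = (\<lambda>x. if x \<in> \<Omega> then (SUP v\<in>S. v x) else g x)" unfolding u_def S_def by (rule refl)
  have Sne: "S \<noteq> {}" using v0 S_def by auto
  have bdd: "bdd_above ((\<lambda>v. v x) ` S)" for x
    using Mb S_def by (auto intro!: bdd_aboveI[of _ M])
  have ge: "v x \<le> u x" if "v \<in> S" for v x
  proof (cases "x \<in> \<Omega>")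
    case True then show ?thesis using cSUP_upper[OF that bdd] uS by simp
  next
    case False then show ?thesis using that S_def uS by (simp add: visc_sub_def)
  qed
  have uM: "u x \<le> M" if "x \<in> \<Omega>" for x
    using that Mb S_def Sne by (auto simp: uS intro!: cSUP_least)
  obtain Bg where Bg: "\<forall>y\<in>g ` (- \<Omega>). \<bar>y\<bar> \<le> Bg" using g_bdd bounded_real by blast
  obtain B0 where B0: "\<forall>y\<in>range v0. \<bar>y\<bar> \<le> B0"
    using v0 bounded_real by (auto simp: visc_sub_def Xbar_def)
  have uX: "u \<in> Xbar" unfolding Xbar_def bounded_real
  proof (intro CollectI exI[of _ "max \<bar>M\<bar> (max Bg B0)"] ballI)
    fix y assume "y \<in> range u"
    then obtain x where y: "y = u x" by auto
    show "\<bar>y\<bar> \<le> max \<bar>M\<bar> (max Bg B0)"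
    proof (cases "x \<in> \<Omega>")
      case True
      have "v0 x \<le> u x" using ge v0 S_def by auto
      moreover have "\<bar>v0 x\<bar> \<le> B0" using B0 by auto
      ultimately show ?thesis using uM[OF True] y by auto
    next
      case False
      have "\<bar>g x\<bar> \<le> Bg" using Bg False by simp
      then show ?thesis using y uS False by simp
    qed
  qed
  have usub: "visc_sub X A \<Omega> g u"
    unfolding visc_sub_def
  proof (intro conjI uX ballI impI)
    fix x assume "x \<in> - \<Omega>" then show "u x \<le> g x" by (simp add: uS)
  next
    fix x \<phi> assume x: "x \<in> \<Omega>" and ph: "\<phi> \<in> X" and le: "u \<le> \<phi>"
    obtain s0 where s0: "A x \<phi> s0 = 0" and s0u: "\<And>s. A x \<phi> s = 0 \<Longrightarrow> s = s0"
      using A_c[OF ph] by blast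
    have vle: "A x \<phi> (v x) \<le> 0" if "v \<in> S" for v
    proof -
      have "v \<le> \<phi>" using le ge that by (meson dual_order.trans le_fun_def)
      then show ?thesis using that S_def x ph by (auto simp: visc_sub_def)
    qed
    show "A x \<phi> (u x) \<le> 0"
    proof (rule ccontr)
      assume neg: "\<not> A x \<phi> (u x) \<le> 0"
      have "s0 < u x"
      proof (rule ccontr)
        assume "\<not> s0 < u x"
        then have "A x \<phi> (u x) \<le> A x \<phi> s0" using A_b[OF ph] by simp
        then show False using neg s0 by simp
      qed
      then have "s0 < (SUP v\<in>S. v x)" using x uS by simp
      then obtain v where v: "v \<in> S" "s0 < v x" using less_cSUP_iff[OF Sne bdd] by blast
      have "A x \<phi> s0 \<le> A x \<phi> (v x)" using A_b[OF ph] v by simp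
      then have "A x \<phi> (v x) = 0" using vle[OF v(1)] s0 by simp
      then show False using s0u v by fastforce
    qed
  qed
  have usuper: "visc_super X A \<Omega> g u"
    unfolding visc_super_def
  proof (intro conjI uX ballI impI)
    fix x assume "x \<in> - \<Omega>" then show "g x \<le> u x" by (simp add: uS)
  next
    fix x \<phi> assume x: "x \<in> \<Omega>" and ph: "\<phi> \<in> X" and le: "\<phi> \<le> u"
    obtain s0 where s0: "A x \<phi> s0 = 0"
      using A_c[OF ph] by blast
    show "0 \<le> A x \<phi> (u x)"
    proof (rule ccontr)
      assume neg: "\<not> 0 \<le> A x \<phi> (u x)"
      have lt: "u x < s0"
      proof (rule ccontr)
        assume "\<not> u x < s0"
        then have "A x \<phi> s0 \<le> A x \<phi> (u x)" using A_b[OF ph] by simp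
        then show False using neg s0 by simp
      qed
      define w where "w = u(x := s0)"
      have uw: "u \<le> w" using lt by (auto simp: w_def le_fun_def)
      have wX: "w \<in> Xbar"
      proof -
        obtain B where B: "\<forall>y\<in>range u. \<bar>y\<bar> \<le> B" using uX bounded_real by (auto simp: Xbar_def)
        show ?thesis unfolding Xbar_def bounded_real
        proof (intro CollectI exI[of _ "max B \<bar>s0\<bar>"] ballI)
          fix y assume "y \<in> range w"
          then obtain z where z: "y = w z" by auto
          show "\<bar>y\<bar> \<le> max B \<bar>s0\<bar>"
          proof (cases "z = x")
            case True then show ?thesis using z by (simp add: w_def)
          next
            case False
            have "\<bar>u z\<bar> \<le> B" using B by simp
            then show ?thesis using z False by (simp add: w_def)
          qed
        qed
      qed
      have "visc_sub X A \<Omega> g w"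
        unfolding visc_sub_def
      proof (intro conjI wX ballI impI)
        fix y assume "y \<in> - \<Omega>" then show "w y \<le> g y" using x by (auto simp: w_def uS)
      next
        fix y \<psi> assume y: "y \<in> \<Omega>" and ps: "\<psi> \<in> X" and wp: "w \<le> \<psi>"
        show "A y \<psi> (w y) \<le> 0"
        proof (cases "y = x")
          case True
          have "\<phi> \<le> \<psi>" using le uw wp by (meson dual_order.trans)
          then have "A x \<psi> s0 \<le> A x \<phi> s0" using A_a ph ps by blast
          then show ?thesis using True s0 by (simp add: w_def)
        next
          case False
          have "u \<le> \<psi>" using uw wp by (meson dual_order.trans)
          then have "A y \<psi> (u y) \<le> 0" using usub y ps by (auto simp: visc_sub_def)
          then show ?thesis using False by (simp add: w_def)
        qed
      qed
      then have "w x \<le> u x" using ge S_def by auto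
      then show False using lt by (simp add: w_def)
    qed
  qed
  show ?thesis using usub usuper by (simp add: visc_sol_def)
qed

lemma perron_super:
  fixes X :: "('a \<Rightarrow> real) set"
    and A :: "'a \<Rightarrow> ('a \<Rightarrow> real) \<Rightarrow> real \<Rightarrow> real"
    and \<Omega> :: "'a set" and g :: "'a \<Rightarrow> real"
  assumes g_bdd: "bounded (g ` (- \<Omega>))"
    and A_a: "\<And>x \<phi>1 \<phi>2 s. \<phi>1 \<in> X \<Longrightarrow> \<phi>2 \<in> X \<Longrightarrow> \<phi>1 \<le> \<phi>2 \<Longrightarrow> A x \<phi>2 s \<le> A x \<phi>1 s"
    and A_b: "\<And>x \<phi> s1 s2. \<phi> \<in> X \<Longrightarrow> s1 \<le> s2 \<Longrightarrow> A x \<phi> s1 \<le> A x \<phi> s2"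
    and A_c: "\<And>x \<phi>. \<phi> \<in> X \<Longrightarrow> \<exists>!s. A x \<phi> s = 0"
    and v0: "visc_super X A \<Omega> g v0"
    and Mb: "\<forall>v. visc_super X A \<Omega> g v \<longrightarrow> (\<forall>x. M \<le> v x)"
  defines "S \<equiv> {v. visc_super X A \<Omega> g v}"
    and "u \<equiv> \<lambda>x. if x \<in> \<Omega> then (INF v\<in>{v. visc_super X A \<Omega> g v}. v x) else g x"
  shows "visc_sol X A \<Omega> g u"
proof -
  have uS: "u = (\<lambda>x. if x \<in> \<Omega> then (INF v\<in>S. v x) else g x)" unfolding u_def S_def by (rule refl)
  have Sne: "S \<noteq> {}" using v0 S_def by auto
  have bdd: "bdd_below ((\<lambda>v. v x) ` S)" for x
    using Mb S_def by (auto intro!: bdd_belowI[of _ M])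
  have ge: "u x \<le> v x" if "v \<in> S" for v x
  proof (cases "x \<in> \<Omega>")
    case True then show ?thesis using cINF_lower[OF bdd that] uS by simp
  next
    case False then show ?thesis using that S_def uS by (simp add: visc_super_def)
  qed
  have uM: "M \<le> u x" if "x \<in> \<Omega>" for x
    using that Mb S_def Sne by (auto simp: uS intro!: cINF_greatest)
  obtain Bg where Bg: "\<forall>y\<in>g ` (- \<Omega>). \<bar>y\<bar> \<le> Bg" using g_bdd bounded_real by blast
  obtain B0 where B0: "\<forall>y\<in>range v0. \<bar>y\<bar> \<le> B0"
    using v0 bounded_real by (auto simp: visc_super_def Xbar_def)
  have uX: "u \<in> Xbar" unfolding Xbar_def bounded_real
  proof (intro CollectI exI[of _ "max \<bar>M\<bar> (max Bg B0)"] ballI)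
    fix y assume "y \<in> range u"
    then obtain x where y: "y = u x" by auto
    show "\<bar>y\<bar> \<le> max \<bar>M\<bar> (max Bg B0)"
    proof (cases "x \<in> \<Omega>")
      case True
      have "u x \<le> v0 x" using ge v0 S_def by auto
      moreover have "\<bar>v0 x\<bar> \<le> B0" using B0 by auto
      ultimately show ?thesis using uM[OF True] y by auto
    next
      case False
      have "\<bar>g x\<bar> \<le> Bg" using Bg False by simp
      then show ?thesis using y uS False by simp
    qed
  qed
  have usuper: "visc_super X A \<Omega> g u"
    unfolding visc_super_def
  proof (intro conjI uX ballI impI)
    fix x assume "x \<in> - \<Omega>" then show "g x \<le> u x" by (simp add: uS)
  next
    fix x \<phi> assume x: "x \<in> \<Omega>" and ph: "\<phi> \<in> X" and le: "\<phi> \<le> u"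
    obtain s0 where s0: "A x \<phi> s0 = 0" and s0u: "\<And>s. A x \<phi> s = 0 \<Longrightarrow> s = s0"
      using A_c[OF ph] by blast
    have vge: "0 \<le> A x \<phi> (v x)" if "v \<in> S" for v
    proof -
      have "\<phi> \<le> v" using le ge that by (meson dual_order.trans le_fun_def)
      then show ?thesis using that S_def x ph by (auto simp: visc_super_def)
    qed
    show "0 \<le> A x \<phi> (u x)"
    proof (rule ccontr)
      assume neg: "\<not> 0 \<le> A x \<phi> (u x)"
      have "u x < s0"
      proof (rule ccontr)
        assume "\<not> u x < s0"
        then have "A x \<phi> s0 \<le> A x \<phi> (u x)" using A_b[OF ph] by simp
        then show False using neg s0 by simp
      qed
      then have "(INF v\<in>S. v x) < s0" using x uS by simp
      then obtain v where v: "v \<in> S" "v x < s0" using cINF_less_iff[OF Sne bdd] by blast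
      have "A x \<phi> (v x) \<le> A x \<phi> s0" using A_b[OF ph] v by simp
      then have "A x \<phi> (v x) = 0" using vge[OF v(1)] s0 by simp
      then show False using s0u v by fastforce
    qed
  qed
  have usub: "visc_sub X A \<Omega> g u"
    unfolding visc_sub_def
  proof (intro conjI uX ballI impI)
    fix x assume "x \<in> - \<Omega>" then show "u x \<le> g x" by (simp add: uS)
  next
    fix x \<phi> assume x: "x \<in> \<Omega>" and ph: "\<phi> \<in> X" and le: "u \<le> \<phi>"
    obtain s0 where s0: "A x \<phi> s0 = 0"
      using A_c[OF ph] by blast
    show "A x \<phi> (u x) \<le> 0"
    proof (rule ccontr)
      assume neg: "\<not> A x \<phi> (u x) \<le> 0"
      have lt: "s0 < u x"
      proof (rule ccontr)
        assume "\<not> s0 < u x"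
        then have "A x \<phi> (u x) \<le> A x \<phi> s0" using A_b[OF ph] by simp
        then show False using neg s0 by simp
      qed
      define w where "w = u(x := s0)"
      have uw: "w \<le> u" using lt by (auto simp: w_def le_fun_def)
      have wX: "w \<in> Xbar"
      proof -
        obtain B where B: "\<forall>y\<in>range u. \<bar>y\<bar> \<le> B" using uX bounded_real by (auto simp: Xbar_def)
        show ?thesis unfolding Xbar_def bounded_real
        proof (intro CollectI exI[of _ "max B \<bar>s0\<bar>"] ballI)
          fix y assume "y \<in> range w"
          then obtain z where z: "y = w z" by auto
          show "\<bar>y\<bar> \<le> max B \<bar>s0\<bar>"
          proof (cases "z = x")
            case True then show ?thesis using z by (simp add: w_def)
          next
            case False
            have "\<bar>u z\<bar> \<le> B" using B by simp
            then show ?thesis using z False by (simp add: w_def)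
          qed
        qed
      qed
      have "visc_super X A \<Omega> g w"
        unfolding visc_super_def
      proof (intro conjI wX ballI impI)
        fix y assume "y \<in> - \<Omega>" then show "g y \<le> w y" using x by (auto simp: w_def uS)
      next
        fix y \<psi> assume y: "y \<in> \<Omega>" and ps: "\<psi> \<in> X" and wp: "\<psi> \<le> w"
        show "0 \<le> A y \<psi> (w y)"
        proof (cases "y = x")
          case True
          have "\<psi> \<le> \<phi>" using le uw wp by (meson dual_order.trans)
          then have "A x \<phi> s0 \<le> A x \<psi> s0" using A_a ph ps by blast
          then show ?thesis using True s0 by (simp add: w_def)
        next
          case False
          have "\<psi> \<le> u" using uw wp by (meson dual_order.trans)
          then have "0 \<le> A y \<psi> (u y)" using usuper y ps by (auto simp: visc_super_def)
          then show ?thesis using False by (simp add: w_def)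
        qed
      qed
      then have "u x \<le> w x" using ge S_def by auto
      then show False using lt by (simp add: w_def)
    qed
  qed
  show ?thesis using usub usuper by (simp add: visc_sol_def)
qed

theorem mainTheorem6:
  fixes X :: "('a::euclidean_space \<Rightarrow> real) set"
    and A :: "'a \<Rightarrow> ('a \<Rightarrow> real) \<Rightarrow> real \<Rightarrow> real"
    and \<Omega> :: "'a set" and g :: "'a \<Rightarrow> real"
  assumes X_sub: "X \<subseteq> Xbar"
    and \<Omega>_open: "open \<Omega>"
    and g_bdd: "bounded (g ` (- \<Omega>))"
    and A_a: "\<And>x \<phi>1 \<phi>2 s. \<phi>1 \<in> X \<Longrightarrow> \<phi>2 \<in> X \<Longrightarrow> \<phi>1 \<le> \<phi>2 \<Longrightarrow> A x \<phi>2 s \<le> A x \<phi>1 s"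
    and A_b: "\<And>x \<phi> s1 s2. \<phi> \<in> X \<Longrightarrow> s1 \<le> s2 \<Longrightarrow> A x \<phi> s1 \<le> A x \<phi> s2"
    and A_c: "\<And>x \<phi>. \<phi> \<in> X \<Longrightarrow> \<exists>!s. A x \<phi> s = 0"
  shows "((\<exists>v. visc_sub X A \<Omega> g v) \<and> (\<exists>M. \<forall>v. visc_sub X A \<Omega> g v \<longrightarrow> (\<forall>x. v x \<le> M))
           \<longrightarrow> visc_sol X A \<Omega> g
                 (\<lambda>x. if x \<in> \<Omega> then (SUP v\<in>{v. visc_sub X A \<Omega> g v}. v x) else g x))
       \<and> ((\<exists>v. visc_super X A \<Omega> g v) \<and> (\<exists>M. \<forall>v. visc_super X A \<Omega> g v \<longrightarrow> (\<forall>x. M \<le> v x))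
           \<longrightarrow> visc_sol X A \<Omega> g
                 (\<lambda>x. if x \<in> \<Omega> then (INF v\<in>{v. visc_super X A \<Omega> g v}. v x) else g x))"
proof (intro conjI impI)
  assume h: "(\<exists>v. visc_sub X A \<Omega> g v) \<and> (\<exists>M. \<forall>v. visc_sub X A \<Omega> g v \<longrightarrow> (\<forall>x. v x \<le> M))"
  then obtain v0 M where "visc_sub X A \<Omega> g v0" "\<forall>v. visc_sub X A \<Omega> g v \<longrightarrow> (\<forall>x. v x \<le> M)" by blast
  note a = this
  show "visc_sol X A \<Omega> g (\<lambda>x. if x \<in> \<Omega> then (SUP v\<in>{v. visc_sub X A \<Omega> g v}. v x) else g x)"
    by (rule perron_sub[OF g_bdd A_a A_b A_c a])
next
  assume h: "(\<exists>v. visc_super X A \<Omega> g v) \<and> (\<exists>M. \<forall>v. visc_super X A \<Omega> g v \<longrightarrow> (\<forall>x. M \<le> v x))"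
  then obtain v0 M where "visc_super X A \<Omega> g v0" "\<forall>v. visc_super X A \<Omega> g v \<longrightarrow> (\<forall>x. M \<le> v x)" by blast
  note a = this
  show "visc_sol X A \<Omega> g (\<lambda>x. if x \<in> \<Omega> then (INF v\<in>{v. visc_super X A \<Omega> g v}. v x) else g x)"
    by (rule perron_super[OF g_bdd A_a A_b A_c a])
qed

end
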